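(* Let $\mathcal H$ be a complex separable Hilbert space and let $A,B,A_n,B_n$ ($n\in\mathbb N$) be self-adjoint operators in $\mathcal H$. If $\phi,\psi\in\mathfrak A_r^s(E_A)$, then $\phi+\psi\in\mathfrak A_r^s(E_A)$; and if $\phi,\psi\in\mathfrak A_l^s(E_B)$, then $\phi+\psi\in\mathfrak A_l^s(E_B)$.
   Context: For a function $\phi$ on $\mathbb R^2$, an admissible representation of $\phi$ consists of a measure space $(\Omega,\eta)$ and measurable functions $\alpha,\beta$ on $\mathbb R\times\Omega$ with $\phi(\lambda,\mu)=\int_\Omega\alpha(\lambda,t)\beta(\mu,t)\,d\eta(t)$ for $(\lambda,\mu)\in\mathbb R^2$, $\sup_{\lambda\in\mathbb R}\int_\Omega|\alpha(\lambda,t)|^2d\eta(t)<\infty$ and $\sup_{\mu\in\mathbb R}\int_\Omega|\beta(\mu,t)|^2d\eta(t)<\infty$. Put $a(t)=\int_{\mathbb R}\alpha(\lambda,t)\,dE_A(\lambda)$, $a_n(t)=\int_{\mathbb R}\alpha(\lambda,t)\,dE_{A_n}(\lambda)$, $b(t)=\int_{\mathbb R}\beta(\mu,t)\,dE_B(\mu)$, $b_n(t)=\int_{\mathbb R}\beta(\mu,t)\,dE_{B_n}(\mu)$, where $E_T$ is the spectral measure of $T$. Then $\phi\in\mathfrak A_r^s(E_A)$ means $\phi$ has an admissible representation with $\lim_{n\to\infty}\int_\Omega\|a_n(t)v-a(t)v\|^2d\eta(t)=0$ for every $v\in\mathcal H$, and $\phi\in\mathfrak A_l^s(E_B)$ means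 $\phi$ has an admissible representation with $\lim_{n\to\infty}\int_\Omega\|b_n(t)v-b(t)v\|^2d\eta(t)=0$ for every $v\in\mathcal H$. *)

theory Defs
  imports "HOL-Analysis.Analysis"
begin

class chs_complex_vector = ab_group_add +
  fixes scaleC :: "complex \<Rightarrow> 'a \<Rightarrow> 'a"
  assumes scaleC_add_right: "scaleC a (x + y) = scaleC a x + scaleC a y"
    and scaleC_add_left: "scaleC (a + b) x = scaleC a x + scaleC b x"
    and scaleC_scaleC: "scaleC a (scaleC b x) = scaleC (a * b) x"
    and scaleC_one: "scaleC 1 x = x"

text \<open>Inner product: linear in the first, conjugate linear in the second argument.\<close>
class chs_complex_inner = chs_complex_vector +
  fixes cinner :: "'a \<Rightarrow> 'a \<Rightarrow> complex"
  assumes cinner_add_left: "cinner (x + y) z = cinner x z + cinner y z"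
    and cinner_scaleC_left: "cinner (scaleC a x) y = a * cinner x y"
    and cinner_commute: "cinner y x = cnj (cinner x y)"
    and cinner_ge_zero: "0 \<le> Re (cinner x x)"
    and cinner_eq_zero_iff: "cinner x x = 0 \<longleftrightarrow> x = 0"

definition cnorm :: "'a::chs_complex_inner \<Rightarrow> real" where
  "cnorm x = sqrt (Re (cinner x x))"

class chs_chilbert = chs_complex_inner +
  assumes chs_complete:
    "(\<forall>e>0. \<exists>N. \<forall>m\<ge>N. \<forall>n\<ge>N. sqrt (Re (cinner (X m - X n) (X m - X n))) < e)
      \<Longrightarrow> \<exists>L. (\<lambda>n. sqrt (Re (cinner (X n - L) (X n - L)))) \<longlonglongrightarrow> 0"

definition cdense :: "'h::chs_complex_inner set \<Rightarrow> bool" where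
  "cdense D \<longleftrightarrow> (\<forall>x. \<forall>e>0. \<exists>d\<in>D. cnorm (x - d) < e)"

definition separable_ch :: "'h::chs_complex_inner set \<Rightarrow> bool" where
  "separable_ch H \<longleftrightarrow> (\<exists>D\<subseteq>H. countable D \<and> (\<forall>x\<in>H. \<forall>e>0. \<exists>d\<in>D. cnorm (x - d) < e))"

definition clinear :: "('h::chs_complex_vector \<Rightarrow> 'h) \<Rightarrow> bool" where
  "clinear f \<longleftrightarrow> (\<forall>x y. f (x + y) = f x + f y) \<and> (\<forall>a x. f (scaleC a x) = scaleC a (f x))"

definition csubspace :: "'h::chs_complex_vector set \<Rightarrow> bool" where
  "csubspace D \<longleftrightarrow> 0 \<in> D \<and> (\<forall>x\<in>D. \<forall>y\<in>D. x + y \<in> D) \<and> (\<forall>a. \<forall>x\<in>D. scaleC a x \<in> D)"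

text \<open>An operator in H is a pair (domain, action).\<close>
type_synonym 'h op = "'h set \<times> ('h \<Rightarrow> 'h)"

definition self_adjoint :: "'h::chs_chilbert op \<Rightarrow> bool" where
  "self_adjoint A \<longleftrightarrow>
     (let D = fst A; T = snd A in
       csubspace D \<and> cdense D \<and>
       (\<forall>x\<in>D. \<forall>y\<in>D. T (x + y) = T x + T y) \<and> (\<forall>a. \<forall>x\<in>D. T (scaleC a x) = scaleC a (T x)) \<and>
       \<comment> \<open>dom(T) = dom(T*) and T* = T on it\<close>
       D = {u. \<exists>w. \<forall>v\<in>D. cinner (T v) u = cinner v w} \<and>
       (\<forall>u\<in>D. \<forall>v\<in>D. cinner (T v) u = cinner v (T u)))"

definition is_pvm :: "(real set \<Rightarrow> 'h::chs_chilbert \<Rightarrow> 'h) \<Rightarrow> bool" where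
  "is_pvm E \<longleftrightarrow>
     (\<forall>S. S \<notin> sets borel \<longrightarrow> E S = (\<lambda>_. 0)) \<and>
     (\<forall>S\<in>sets borel. clinear (E S) \<and> (\<forall>x. E S (E S x) = E S x) \<and>
                      (\<forall>x y. cinner (E S x) y = cinner x (E S y))) \<and>
     (\<forall>x. E UNIV x = x) \<and>
     (\<forall>S\<in>sets borel. \<forall>T\<in>sets borel. \<forall>x. E (S \<inter> T) x = E S (E T x)) \<and>
     (\<forall>F. range F \<subseteq> sets borel \<longrightarrow> disjoint_family F \<longrightarrow>
        (\<forall>x. (\<lambda>n. cnorm ((\<Sum>i<n. E (F i) x) - E (\<Union>i. F i) x)) \<longlonglongrightarrow> 0))"

definition pvm_measure :: "(real set \<Rightarrow> 'h::chs_chilbert \<Rightarrow> 'h) \<Rightarrow> 'h \<Rightarrow> real measure" where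
  "pvm_measure E v = measure_of UNIV (sets borel) (\<lambda>S. ennreal ((cnorm (E S v))\<^sup>2))"

text \<open>Spectral integral of a bounded function, characterised weakly:
  <(\<integral> f dE) v, u> = \<integral> f d<E(.) v, u>, the complex measure written by polarisation.\<close>
definition spint_bdd :: "(real set \<Rightarrow> 'h::chs_chilbert \<Rightarrow> 'h) \<Rightarrow> (real \<Rightarrow> complex) \<Rightarrow> 'h \<Rightarrow> 'h" where
  "spint_bdd E f v = (THE w. \<forall>u. cinner w u =
      (1/4) * (\<Sum>k<(4::nat). \<i>^k * (\<integral>l. f l \<partial>pvm_measure E (v + scaleC (\<i>^k) u))))"

definition trunc_fun :: "nat \<Rightarrow> (real \<Rightarrow> complex) \<Rightarrow> real \<Rightarrow> complex" where
  "trunc_fun N f l = (if cmod (f l) \<le> real N then f l else 0)"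

definition spint :: "(real set \<Rightarrow> 'h::chs_chilbert \<Rightarrow> 'h) \<Rightarrow> (real \<Rightarrow> complex) \<Rightarrow> 'h \<Rightarrow> 'h" where
  "spint E f v = (THE w. (\<lambda>N. cnorm (spint_bdd E (trunc_fun N f) v - w)) \<longlonglongrightarrow> 0)"

definition spectral_measure :: "'h::chs_chilbert op \<Rightarrow> (real set \<Rightarrow> 'h \<Rightarrow> 'h)" where
  "spectral_measure A = (THE E. is_pvm E \<and>
      fst A = {v. (\<integral>\<^sup>+ l. ennreal (l\<^sup>2) \<partial>pvm_measure E v) < \<infinity>} \<and>
      (\<forall>v\<in>fst A. snd A v = spint E (\<lambda>l. complex_of_real l) v))"

definition admissible_rep ::
  "'w measure \<Rightarrow> (real \<Rightarrow> 'w \<Rightarrow> complex) \<Rightarrow> (real \<Rightarrow> 'w \<Rightarrow> complex) \<Rightarrow> (real \<Rightarrow> real \<Rightarrow> complex) \<Rightarrow> bool" where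
  "admissible_rep \<eta> \<alpha> \<beta> \<phi> \<longleftrightarrow>
     (\<lambda>(l, t). \<alpha> l t) \<in> borel_measurable (borel \<Otimes>\<^sub>M \<eta>) \<and>
     (\<lambda>(l, t). \<beta> l t) \<in> borel_measurable (borel \<Otimes>\<^sub>M \<eta>) \<and>
     (\<forall>l m. \<phi> l m = (\<integral>t. \<alpha> l t * \<beta> m t \<partial>\<eta>)) \<and>
     (\<exists>C::real. \<forall>l. (\<integral>\<^sup>+ t. ennreal ((cmod (\<alpha> l t))\<^sup>2) \<partial>\<eta>) \<le> ennreal C) \<and>
     (\<exists>C::real. \<forall>m. (\<integral>\<^sup>+ t. ennreal ((cmod (\<beta> m t))\<^sup>2) \<partial>\<eta>) \<le> ennreal C)"

definition strong_approx ::
  "'w measure \<Rightarrow> (real \<Rightarrow> 'w \<Rightarrow> complex) \<Rightarrow> (real set \<Rightarrow> 'h::chs_chilbert \<Rightarrow> 'h) \<Rightarrow> (nat \<Rightarrow> real set \<Rightarrow> 'h \<Rightarrow> 'h) \<Rightarrow> bool" where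
  "strong_approx \<eta> \<gamma> E En \<longleftrightarrow>
     (\<forall>v. (\<lambda>n. \<integral>\<^sup>+ t. ennreal ((cnorm (spint (En n) (\<lambda>l. \<gamma> l t) v - spint E (\<lambda>l. \<gamma> l t) v))\<^sup>2) \<partial>\<eta>)
            \<longlonglongrightarrow> 0)"

text \<open>Membership in A_r^s(E) (resp. A_l^s(E)), with the measure space \<Omega> of the
  representation living in the type 'w.\<close>
definition in_Ars :: "'w itself \<Rightarrow> (real set \<Rightarrow> 'h::chs_chilbert \<Rightarrow> 'h) \<Rightarrow> (nat \<Rightarrow> real set \<Rightarrow> 'h \<Rightarrow> 'h)
    \<Rightarrow> (real \<Rightarrow> real \<Rightarrow> complex) \<Rightarrow> bool" where
  "in_Ars _ E En \<phi> \<longleftrightarrow> (\<exists>(\<eta>::'w measure) \<alpha> \<beta>. admissible_rep \<eta> \<alpha> \<beta> \<phi> \<and> strong_approx \<eta> \<alpha> E En)"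

definition in_Als :: "'w itself \<Rightarrow> (real set \<Rightarrow> 'h::chs_chilbert \<Rightarrow> 'h) \<Rightarrow> (nat \<Rightarrow> real set \<Rightarrow> 'h \<Rightarrow> 'h)
    \<Rightarrow> (real \<Rightarrow> real \<Rightarrow> complex) \<Rightarrow> bool" where
  "in_Als _ E En \<phi> \<longleftrightarrow> (\<exists>(\<eta>::'w measure) \<alpha> \<beta>. admissible_rep \<eta> \<alpha> \<beta> \<phi> \<and> strong_approx \<eta> \<beta> E En)"

end

theory Submission
  imports Defs
begin

definition sumOm :: "'a measure \<Rightarrow> 'b measure \<Rightarrow> ('a + 'b) set" where
  "sumOm M N = Inl ` space M \<union> Inr ` space N"
definition sumS :: "'a measure \<Rightarrow> 'b measure \<Rightarrow> ('a + 'b) set set" where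
  "sumS M N = {A. A \<subseteq> sumOm M N \<and> Inl -` A \<in> sets M \<and> Inr -` A \<in> sets N}"
definition summ :: "'a measure \<Rightarrow> 'b measure \<Rightarrow> ('a + 'b) measure" where
  "summ M N = measure_of (sumOm M N) (sumS M N) (\<lambda>A. emeasure M (Inl -` A) + emeasure N (Inr -` A))"

lemma vimage_cross[simp]: "Inr -` Inl ` A = {}" "Inl -` Inr ` B = {}"
   "Inl -` Inl ` A = A" "Inr -` Inr ` B = B" by auto

lemma vimage_Om[simp]: "Inl -` sumOm M N = space M" "Inr -` sumOm M N = space N"
  by (auto simp: sumOm_def)

lemma sigma_sumS: "sigma_algebra (sumOm M N) (sumS M N)"
  unfolding sigma_algebra_iff2
proof (intro conjI allI ballI impI)
  show "sumS M N \<subseteq> Pow (sumOm M N)" by (auto simp: sumS_def)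
  show "{} \<in> sumS M N" by (auto simp: sumS_def)
  fix s assume "s \<in> sumS M N"
  then show "sumOm M N - s \<in> sumS M N" by (auto simp: sumS_def vimage_Diff)
next
  fix A :: "nat \<Rightarrow> _" assume "range A \<subseteq> sumS M N"
  then show "\<Union> (range A) \<in> sumS M N"
    by (auto simp: sumS_def vimage_UN intro!: sets.countable_UN)
qed

lemma ca_sumS: "countably_additive (sumS M N) (\<lambda>A. emeasure M (Inl -` A) + emeasure N (Inr -` A))"
  unfolding countably_additive_def
proof (intro allI impI)
  fix A :: "nat \<Rightarrow> _" assume r: "range A \<subseteq> sumS M N" and d: "disjoint_family A"
    and "\<Union> (range A) \<in> sumS M N"
  have d1: "disjoint_family (\<lambda>i. Inl -` A i)" "disjoint_family (\<lambda>i. Inr -` A i)"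
    using d by (auto simp: disjoint_family_on_def)
  have r1: "range (\<lambda>i. Inl -` A i) \<subseteq> sets M" "range (\<lambda>i. Inr -` A i) \<subseteq> sets N"
    using r by (auto simp: sumS_def)
  have "(\<Sum>i. emeasure M (Inl -` A i) + emeasure N (Inr -` A i)) =
        (\<Sum>i. emeasure M (Inl -` A i)) + (\<Sum>i. emeasure N (Inr -` A i))"
    by (rule suminf_add[symmetric]) auto
  also have "\<dots> = emeasure M (Inl -` \<Union> (range A)) + emeasure N (Inr -` \<Union> (range A))"
    using suminf_emeasure[OF r1(1) d1(1)] suminf_emeasure[OF r1(2) d1(2)] by (simp add: vimage_UN)
  finally show "(\<Sum>i. emeasure M (Inl -` A i) + emeasure N (Inr -` A i)) =
        emeasure M (Inl -` \<Union> (range A)) + emeasure N (Inr -` \<Union> (range A))" .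
qed

lemma sets_summ: "sets (summ M N) = sumS M N"
  unfolding summ_def by (rule sigma_algebra.sets_measure_of_eq[OF sigma_sumS])

lemma space_summ: "space (summ M N) = sumOm M N"
  unfolding summ_def by (rule space_measure_of) (auto simp: sumS_def)

lemma emeasure_summ: "A \<in> sumS M N \<Longrightarrow> emeasure (summ M N) A = emeasure M (Inl -` A) + emeasure N (Inr -` A)"
  unfolding summ_def
  by (rule emeasure_measure_of_sigma[OF sigma_sumS _ ca_sumS]) (auto simp: positive_def)

lemma Inl_meas: "Inl \<in> measurable M (summ M N)"
  by (auto simp: measurable_def sets_summ space_summ sumS_def sumOm_def)


lemma Inr_meas: "Inr \<in> measurable N (summ M N)"
  by (auto simp: measurable_def sets_summ space_summ sumS_def sumOm_def)


lemma L_sets: "Inl ` space M \<in> sets (summ M N)" "Inr ` space N \<in> sets (summ M N)"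
  by (auto simp: sets_summ sumS_def sumOm_def vimage_image_eq)


lemma projl_restr: "projl \<in> restrict_space (summ M N) {t. isl t} \<rightarrow>\<^sub>M M"
proof -
  have sp: "space (restrict_space (summ M N) {t. isl t}) = Inl ` space M"
    by (auto simp: space_restrict_space space_summ sumOm_def)
  have L: "{t. isl t} \<inter> space (summ M N) = Inl ` space M"
    by (auto simp: space_summ sumOm_def)
  show ?thesis unfolding measurable_def
  proof (safe)
    fix x assume "x \<in> space (restrict_space (summ M N) {t. isl t})"
    then show "projl x \<in> space M" by (auto simp: sp)
  next
    fix A assume A: "A \<in> sets M"
    have "projl -` A \<inter> space (restrict_space (summ M N) {t. isl t}) = Inl ` A"
      using sets.sets_into_space[OF A] by (auto simp: sp)
    also have "\<dots> \<in> sets (restrict_space (summ M N) {t. isl t})"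
      unfolding sets_restrict_space_iff[OF L_sets(1)[of M N, folded L]]
      using A sets.sets_into_space[OF A]
      by (auto simp: sets_summ sumS_def sumOm_def vimage_image_eq)
    finally show "projl -` A \<inter> space (restrict_space (summ M N) {t. isl t}) \<in> sets (restrict_space (summ M N) {t. isl t})" .
  qed
qed

lemma projr_restr: "projr \<in> restrict_space (summ M N) {t. \<not> isl t} \<rightarrow>\<^sub>M N"
proof -
  have sp: "space (restrict_space (summ M N) {t. \<not> isl t}) = Inr ` space N"
    by (auto simp: space_restrict_space space_summ sumOm_def)
  have L: "{t. \<not> isl t} \<inter> space (summ M N) = Inr ` space N"
    by (auto simp: space_summ sumOm_def)
  show ?thesis unfolding measurable_def
  proof (safe)
    fix x assume "x \<in> space (restrict_space (summ M N) {t. \<not> isl t})"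
    then show "projr x \<in> space N" by (auto simp: sp)
  next
    fix A assume A: "A \<in> sets N"
    have "projr -` A \<inter> space (restrict_space (summ M N) {t. \<not> isl t}) = Inr ` A"
      using sets.sets_into_space[OF A] by (auto simp: sp)
    also have "\<dots> \<in> sets (restrict_space (summ M N) {t. \<not> isl t})"
      unfolding sets_restrict_space_iff[OF L_sets(2)[of N M, folded L]]
      using A sets.sets_into_space[OF A]
      by (auto simp: sets_summ sumS_def sumOm_def vimage_image_eq)
    finally show "projr -` A \<inter> space (restrict_space (summ M N) {t. \<not> isl t}) \<in> sets (restrict_space (summ M N) {t. \<not> isl t})" .
  qed
qed

definition comb :: "('l \<Rightarrow> 'a \<Rightarrow> 'c) \<Rightarrow> ('l \<Rightarrow> 'b \<Rightarrow> 'c) \<Rightarrow> 'l \<Rightarrow> 'a + 'b \<Rightarrow> 'c" where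
  "comb f g l t = (if isl t then f l (projl t) else g l (projr t))"

lemma comb_simps[simp]: "comb f g l (Inl s) = f l s" "comb f g l (Inr s') = g l s'"
  by (simp_all add: comb_def)

lemma comb_meas:
  fixes f1 :: "real \<Rightarrow> 'a \<Rightarrow> complex" and f2 :: "real \<Rightarrow> 'b \<Rightarrow> complex"
  assumes "(\<lambda>(l, t). f1 l t) \<in> borel_measurable (borel \<Otimes>\<^sub>M M)"
    and "(\<lambda>(l, t). f2 l t) \<in> borel_measurable (borel \<Otimes>\<^sub>M N)"
  shows "(\<lambda>(l, t). comb f1 f2 l t) \<in> borel_measurable (borel \<Otimes>\<^sub>M summ M N)"
proof -
  have eq: "(\<lambda>(l, t). comb f1 f2 l t) = (\<lambda>x. if isl (snd x) then (\<lambda>(l, t). f1 l t) (fst x, projl (snd x))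
            else (\<lambda>(l, t). f2 l t) (fst x, projr (snd x)))"
    by (auto simp: comb_def fun_eq_iff)
  have S: "{x \<in> space (borel \<Otimes>\<^sub>M summ M N). isl (snd x)} = UNIV \<times> Inl ` space M"
    by (auto simp: space_pair_measure space_summ sumOm_def)
  have S': "{x \<in> space (borel \<Otimes>\<^sub>M summ M N). isl (snd x)} \<in> sets (borel \<Otimes>\<^sub>M summ M N)"
    unfolding S by (rule pair_measureI) (auto intro: L_sets)
  have m1: "(\<lambda>x. (fst x, projl (snd x))) \<in> restrict_space (borel \<Otimes>\<^sub>M summ M N) {x. isl (snd x)} \<rightarrow>\<^sub>M borel \<Otimes>\<^sub>M M"
  proof (rule measurable_Pair)
    show "fst \<in> restrict_space (borel \<Otimes>\<^sub>M summ M N) {x. isl (snd x)} \<rightarrow>\<^sub>M borel"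
      by (rule measurable_restrict_space1) simp
    have "snd \<in> restrict_space (borel \<Otimes>\<^sub>M summ M N) {x. isl (snd x)} \<rightarrow>\<^sub>M restrict_space (summ M N) {t. isl t}"
      by (rule measurable_restrict_space3) auto
    then show "(\<lambda>x. projl (snd x)) \<in> restrict_space (borel \<Otimes>\<^sub>M summ M N) {x. isl (snd x)} \<rightarrow>\<^sub>M M"
      using projl_restr by (rule measurable_compose)
  qed
  have m2: "(\<lambda>x. (fst x, projr (snd x))) \<in> restrict_space (borel \<Otimes>\<^sub>M summ M N) {x. \<not> isl (snd x)} \<rightarrow>\<^sub>M borel \<Otimes>\<^sub>M N"
  proof (rule measurable_Pair)
    show "fst \<in> restrict_space (borel \<Otimes>\<^sub>M summ M N) {x. \<not> isl (snd x)} \<rightarrow>\<^sub>M borel"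
      by (rule measurable_restrict_space1) simp
    have "snd \<in> restrict_space (borel \<Otimes>\<^sub>M summ M N) {x. \<not> isl (snd x)} \<rightarrow>\<^sub>M restrict_space (summ M N) {t. \<not> isl t}"
      by (rule measurable_restrict_space3) auto
    then show "(\<lambda>x. projr (snd x)) \<in> restrict_space (borel \<Otimes>\<^sub>M summ M N) {x. \<not> isl (snd x)} \<rightarrow>\<^sub>M N"
      using projr_restr by (rule measurable_compose)
  qed
  show ?thesis unfolding eq measurable_If_restrict_space_iff[OF S']
    using measurable_compose[OF m1 assms(1)] measurable_compose[OF m2 assms(2)] by simp
qed

lemma density_L: "density (summ M N) (indicator (Inl ` space M)) = distr M (summ M N) Inl"
proof (rule measure_eqI)
  show "sets (density (summ M N) (indicator (Inl ` space M))) = sets (distr M (summ M N) Inl)" by simp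
  fix A assume "A \<in> sets (density (summ M N) (indicator (Inl ` space M)))"
  then have A: "A \<in> sets (summ M N)" by simp
  have "emeasure (density (summ M N) (indicator (Inl ` space M))) A
      = \<integral>\<^sup>+ x. indicator (Inl ` space M \<inter> A) x \<partial>summ M N"
    by (subst emeasure_density[OF _ A]) (auto intro!: nn_integral_cong borel_measurable_indicator L_sets simp: indicator_def)
  also have "\<dots> = emeasure (summ M N) (Inl ` space M \<inter> A)"
    by (intro nn_integral_indicator sets.Int L_sets A)
  also have "\<dots> = emeasure M (Inl -` A \<inter> space M)"
    using A L_sets(1)[of M N] by (subst emeasure_summ) (auto simp: sets_summ[symmetric] Int_commute)
  also have "\<dots> = emeasure (distr M (summ M N) Inl) A"
    using A by (simp add: emeasure_distr[OF Inl_meas])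
  finally show "emeasure (density (summ M N) (indicator (Inl ` space M))) A = emeasure (distr M (summ M N) Inl) A" .
qed

lemma density_R: "density (summ M N) (indicator (Inr ` space N)) = distr N (summ M N) Inr"
proof (rule measure_eqI)
  show "sets (density (summ M N) (indicator (Inr ` space N))) = sets (distr N (summ M N) Inr)" by simp
  fix A assume "A \<in> sets (density (summ M N) (indicator (Inr ` space N)))"
  then have A: "A \<in> sets (summ M N)" by simp
  have "emeasure (density (summ M N) (indicator (Inr ` space N))) A
      = \<integral>\<^sup>+ x. indicator (Inr ` space N \<inter> A) x \<partial>summ M N"
    by (subst emeasure_density[OF _ A]) (auto intro!: nn_integral_cong borel_measurable_indicator L_sets simp: indicator_def)
  also have "\<dots> = emeasure (summ M N) (Inr ` space N \<inter> A)"
    by (intro nn_integral_indicator sets.Int L_sets A)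
  also have "\<dots> = emeasure N (Inr -` A \<inter> space N)"
    using A L_sets(2)[of N M] by (subst emeasure_summ) (auto simp: sets_summ[symmetric] Int_commute)
  also have "\<dots> = emeasure (distr N (summ M N) Inr) A"
    using A by (simp add: emeasure_distr[OF Inr_meas])
  finally show "emeasure (density (summ M N) (indicator (Inr ` space N))) A = emeasure (distr N (summ M N) Inr) A" .
qed


lemma space_summ_cases: "x \<in> space (summ M N) \<Longrightarrow> (\<exists>s\<in>space M. x = Inl s) \<or> (\<exists>s\<in>space N. x = Inr s)"
  by (auto simp: space_summ sumOm_def)

lemma nn_split_meas:
  assumes g: "g \<in> borel_measurable (summ M N)"
  shows "(\<integral>\<^sup>+ t. g t \<partial>summ M N) = (\<integral>\<^sup>+ s. g (Inl s) \<partial>M) + (\<integral>\<^sup>+ s. g (Inr s) \<partial>N)"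
proof -
  have "(\<integral>\<^sup>+ t. g t \<partial>summ M N) = (\<integral>\<^sup>+ t. indicator (Inl ` space M) t * g t + indicator (Inr ` space N) t * g t \<partial>summ M N)"
    by (rule nn_integral_cong) (auto dest!: space_summ_cases simp: indicator_def)
  also have "\<dots> = (\<integral>\<^sup>+ t. indicator (Inl ` space M) t * g t \<partial>summ M N) + (\<integral>\<^sup>+ t. indicator (Inr ` space N) t * g t \<partial>summ M N)"
    using g by (intro nn_integral_add borel_measurable_times_ennreal borel_measurable_indicator L_sets)
  also have "\<dots> = (\<integral>\<^sup>+ t. g t \<partial>density (summ M N) (indicator (Inl ` space M))) + (\<integral>\<^sup>+ t. g t \<partial>density (summ M N) (indicator (Inr ` space N)))"
    using g by (simp add: nn_integral_density borel_measurable_indicator L_sets)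
  also have "\<dots> = (\<integral>\<^sup>+ s. g (Inl s) \<partial>M) + (\<integral>\<^sup>+ s. g (Inr s) \<partial>N)"
    unfolding density_L density_R using g
    by (simp add: nn_integral_distr[OF Inl_meas] nn_integral_distr[OF Inr_meas])
  finally show ?thesis .
qed

lemma nn_split_le:
  "(\<integral>\<^sup>+ t. g t \<partial>summ M N) \<le> (\<integral>\<^sup>+ s. g (Inl s) \<partial>M) + (\<integral>\<^sup>+ s. g (Inr s) \<partial>N)"
  unfolding nn_integral_def[of "summ M N"]
proof (rule SUP_least)
  fix h assume "h \<in> {g'. simple_function (summ M N) g' \<and> g' \<le> g}"
  then have h: "simple_function (summ M N) h" "h \<le> g" by auto
  have "integral\<^sup>S (summ M N) h = (\<integral>\<^sup>+ t. h t \<partial>summ M N)"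
    using h by (simp add: nn_integral_eq_simple_integral)
  also have "\<dots> = (\<integral>\<^sup>+ s. h (Inl s) \<partial>M) + (\<integral>\<^sup>+ s. h (Inr s) \<partial>N)"
    using h by (intro nn_split_meas borel_measurable_simple_function)
  also have "\<dots> \<le> (\<integral>\<^sup>+ s. g (Inl s) \<partial>M) + (\<integral>\<^sup>+ s. g (Inr s) \<partial>N)"
    using h(2) by (intro add_mono nn_integral_mono) (auto simp: le_fun_def)
  finally show "integral\<^sup>S (summ M N) h \<le> (\<integral>\<^sup>+ s. g (Inl s) \<partial>M) + (\<integral>\<^sup>+ s. g (Inr s) \<partial>N)" .
qed

lemma int_split:
  fixes g :: "'a + 'b \<Rightarrow> complex"
  assumes g: "integrable (summ M N) g"
  shows "integral\<^sup>L (summ M N) g = integral\<^sup>L M (\<lambda>s. g (Inl s)) + integral\<^sup>L N (\<lambda>s. g (Inr s))"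
proof -
  have gm: "g \<in> borel_measurable (summ M N)" using g by simp
  have "integral\<^sup>L (summ M N) g = integral\<^sup>L (summ M N) (\<lambda>t. indicator (Inl ` space M) t *\<^sub>R g t + indicator (Inr ` space N) t *\<^sub>R g t)"
    by (rule Bochner_Integration.integral_cong) (auto dest!: space_summ_cases simp: indicator_def)
  also have "\<dots> = integral\<^sup>L (summ M N) (\<lambda>t. indicator (Inl ` space M) t *\<^sub>R g t) + integral\<^sup>L (summ M N) (\<lambda>t. indicator (Inr ` space N) t *\<^sub>R g t)"
    by (intro Bochner_Integration.integral_add integrable_mult_indicator L_sets g)
  also have "\<dots> = integral\<^sup>L (density (summ M N) (\<lambda>t. ennreal (indicator (Inl ` space M) t))) g
         + integral\<^sup>L (density (summ M N) (\<lambda>t. ennreal (indicator (Inr ` space N) t))) g"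
    using gm by (simp add: integral_density borel_measurable_indicator L_sets)
  also have "\<dots> = integral\<^sup>L (distr M (summ M N) Inl) g + integral\<^sup>L (distr N (summ M N) Inr) g"
    by (simp add: ennreal_indicator density_L density_R)
  also have "\<dots> = integral\<^sup>L M (\<lambda>s. g (Inl s)) + integral\<^sup>L N (\<lambda>s. g (Inr s))"
    using gm by (simp add: integral_distr[OF Inl_meas] integral_distr[OF Inr_meas])
  finally show ?thesis .
qed


lemma prod_bound:
  fixes a b :: complex
  shows "ennreal (cmod (a * b)) \<le> ennreal ((cmod a)\<^sup>2) + ennreal ((cmod b)\<^sup>2)"
proof -
  have x: "0 \<le> cmod a" "0 \<le> cmod b" by simp_all
  have "0 \<le> (cmod a - cmod b)\<^sup>2" by simp
  moreover have "(cmod a - cmod b)\<^sup>2 = (cmod a)\<^sup>2 + (cmod b)\<^sup>2 - 2 * (cmod a * cmod b)"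
    by (simp add: power2_diff)
  moreover have "0 \<le> cmod a * cmod b" using x by simp
  ultimately have "cmod a * cmod b \<le> (cmod a)\<^sup>2 + (cmod b)\<^sup>2"
    by linarith
  then show ?thesis
    by (simp add: ennreal_plus[symmetric] norm_mult del: ennreal_plus)
qed

lemma adm_meas:
  assumes "admissible_rep \<eta> \<alpha> \<beta> \<phi>"
  shows "(\<lambda>t. \<alpha> l t) \<in> borel_measurable \<eta>" "(\<lambda>t. \<beta> l t) \<in> borel_measurable \<eta>"
  using measurable_Pair2[of "\<lambda>(l, t). \<alpha> l t" borel \<eta> borel l]
    measurable_Pair2[of "\<lambda>(l, t). \<beta> l t" borel \<eta> borel l] assms
  by (auto simp: admissible_rep_def)

lemma adm_nn_fin:
  assumes a: "admissible_rep \<eta> \<alpha> \<beta> \<phi>"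
  shows "(\<integral>\<^sup>+ t. ennreal (cmod (\<alpha> l t * \<beta> m t)) \<partial>\<eta>) < \<infinity>"
proof -
  obtain C1 C2 :: real where C1: "\<And>l. (\<integral>\<^sup>+ t. ennreal ((cmod (\<alpha> l t))\<^sup>2) \<partial>\<eta>) \<le> ennreal C1"
    and C2: "\<And>m. (\<integral>\<^sup>+ t. ennreal ((cmod (\<beta> m t))\<^sup>2) \<partial>\<eta>) \<le> ennreal C2"
    using a unfolding admissible_rep_def by blast
  have "(\<integral>\<^sup>+ t. ennreal (cmod (\<alpha> l t * \<beta> m t)) \<partial>\<eta>) \<le> (\<integral>\<^sup>+ t. ennreal ((cmod (\<alpha> l t))\<^sup>2) + ennreal ((cmod (\<beta> m t))\<^sup>2) \<partial>\<eta>)"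
    by (intro nn_integral_mono prod_bound)
  also have "\<dots> = (\<integral>\<^sup>+ t. ennreal ((cmod (\<alpha> l t))\<^sup>2) \<partial>\<eta>) + (\<integral>\<^sup>+ t. ennreal ((cmod (\<beta> m t))\<^sup>2) \<partial>\<eta>)"
    using adm_meas[OF a] by (intro nn_integral_add) auto
  also have "\<dots> \<le> ennreal C1 + ennreal C2" by (intro add_mono C1 C2)
  also have "\<dots> < \<infinity>" by simp
  finally show ?thesis .
qed

lemma adm_sum:
  assumes a1: "admissible_rep (\<eta>1::'a measure) \<alpha>1 \<beta>1 \<phi>"
    and a2: "admissible_rep (\<eta>2::'b measure) \<alpha>2 \<beta>2 \<psi>"
  shows "admissible_rep (summ \<eta>1 \<eta>2) (comb \<alpha>1 \<alpha>2) (comb \<beta>1 \<beta>2) (\<lambda>l m. \<phi> l m + \<psi> l m)"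
proof -
  have m\<alpha>: "(\<lambda>(l, t). comb \<alpha>1 \<alpha>2 l t) \<in> borel_measurable (borel \<Otimes>\<^sub>M summ \<eta>1 \<eta>2)"
    using a1 a2 by (intro comb_meas) (auto simp: admissible_rep_def)
  have m\<beta>: "(\<lambda>(l, t). comb \<beta>1 \<beta>2 l t) \<in> borel_measurable (borel \<Otimes>\<^sub>M summ \<eta>1 \<eta>2)"
    using a1 a2 by (intro comb_meas) (auto simp: admissible_rep_def)
  have eq: "\<phi> l m + \<psi> l m = (\<integral>t. comb \<alpha>1 \<alpha>2 l t * comb \<beta>1 \<beta>2 m t \<partial>summ \<eta>1 \<eta>2)" for l m
  proof -
    have mm: "(\<lambda>t. comb \<alpha>1 \<alpha>2 l t * comb \<beta>1 \<beta>2 m t) \<in> borel_measurable (summ \<eta>1 \<eta>2)"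
      using measurable_Pair2[OF m\<alpha>, of l] measurable_Pair2[OF m\<beta>, of m] by simp
    have "(\<integral>\<^sup>+ t. ennreal (norm (comb \<alpha>1 \<alpha>2 l t * comb \<beta>1 \<beta>2 m t)) \<partial>summ \<eta>1 \<eta>2)
        \<le> (\<integral>\<^sup>+ t. ennreal (cmod (\<alpha>1 l t * \<beta>1 m t)) \<partial>\<eta>1) + (\<integral>\<^sup>+ t. ennreal (cmod (\<alpha>2 l t * \<beta>2 m t)) \<partial>\<eta>2)"
      using nn_split_le[where g="\<lambda>t. ennreal (norm (comb \<alpha>1 \<alpha>2 l t * comb \<beta>1 \<beta>2 m t))" and M=\<eta>1 and N=\<eta>2] by simp
    also have "\<dots> < \<infinity>" using adm_nn_fin[OF a1] adm_nn_fin[OF a2] by simp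
    finally have "integrable (summ \<eta>1 \<eta>2) (\<lambda>t. comb \<alpha>1 \<alpha>2 l t * comb \<beta>1 \<beta>2 m t)"
      using mm by (simp add: integrable_iff_bounded)
    then show ?thesis
      using a1 a2 by (simp add: int_split admissible_rep_def)
  qed
  have L2: "\<exists>C::real. \<forall>l. (\<integral>\<^sup>+ t. ennreal ((cmod (comb f1 f2 l t))\<^sup>2) \<partial>summ \<eta>1 \<eta>2) \<le> ennreal C"
    if h1: "\<exists>C::real. \<forall>l. (\<integral>\<^sup>+ t. ennreal ((cmod (f1 l t))\<^sup>2) \<partial>\<eta>1) \<le> ennreal C"
    and h2: "\<exists>C::real. \<forall>l. (\<integral>\<^sup>+ t. ennreal ((cmod (f2 l t))\<^sup>2) \<partial>\<eta>2) \<le> ennreal C"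
    for f1 :: "real \<Rightarrow> 'a \<Rightarrow> complex" and f2 :: "real \<Rightarrow> 'b \<Rightarrow> complex"
  proof -
    obtain C1 where C1: "\<And>l. (\<integral>\<^sup>+ t. ennreal ((cmod (f1 l t))\<^sup>2) \<partial>\<eta>1) \<le> ennreal C1" using h1 by blast
    obtain C2 where C2: "\<And>l. (\<integral>\<^sup>+ t. ennreal ((cmod (f2 l t))\<^sup>2) \<partial>\<eta>2) \<le> ennreal C2" using h2 by blast
    show ?thesis
    proof (intro exI allI)
      fix l
      have "(\<integral>\<^sup>+ t. ennreal ((cmod (comb f1 f2 l t))\<^sup>2) \<partial>summ \<eta>1 \<eta>2)
          \<le> (\<integral>\<^sup>+ t. ennreal ((cmod (f1 l t))\<^sup>2) \<partial>\<eta>1) + (\<integral>\<^sup>+ t. ennreal ((cmod (f2 l t))\<^sup>2) \<partial>\<eta>2)"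
        using nn_split_le[where g="\<lambda>t. ennreal ((cmod (comb f1 f2 l t))\<^sup>2)" and M=\<eta>1 and N=\<eta>2] by simp
      also have "\<dots> \<le> ennreal (max C1 0) + ennreal (max C2 0)"
        by (intro add_mono order_trans[OF C1] order_trans[OF C2] ennreal_leI) auto
      also have "\<dots> = ennreal (max C1 0 + max C2 0)" by (simp add: ennreal_plus)
      finally show "(\<integral>\<^sup>+ t. ennreal ((cmod (comb f1 f2 l t))\<^sup>2) \<partial>summ \<eta>1 \<eta>2) \<le> ennreal (max C1 0 + max C2 0)" .
    qed
  qed
  show ?thesis
    unfolding admissible_rep_def
    using m\<alpha> m\<beta> eq L2[of \<alpha>1 \<alpha>2] L2[of \<beta>1 \<beta>2] a1 a2 unfolding admissible_rep_def by blast
qed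

lemma sa_sum:
  assumes "strong_approx (\<eta>1::'a measure) \<gamma>1 E En" "strong_approx (\<eta>2::'b measure) \<gamma>2 E En"
  shows "strong_approx (summ \<eta>1 \<eta>2) (comb \<gamma>1 \<gamma>2) E En"
  unfolding strong_approx_def
proof
  fix v
  let ?X1 = "\<lambda>n. \<integral>\<^sup>+ t. ennreal ((cnorm (spint (En n) (\<lambda>l. \<gamma>1 l t) v - spint E (\<lambda>l. \<gamma>1 l t) v))\<^sup>2) \<partial>\<eta>1"
  let ?X2 = "\<lambda>n. \<integral>\<^sup>+ t. ennreal ((cnorm (spint (En n) (\<lambda>l. \<gamma>2 l t) v - spint E (\<lambda>l. \<gamma>2 l t) v))\<^sup>2) \<partial>\<eta>2"
  have l: "?X1 \<longlonglongrightarrow> 0" "?X2 \<longlonglongrightarrow> 0" using assms unfolding strong_approx_def by blast+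
  have "(\<lambda>n. ?X1 n + ?X2 n) \<longlonglongrightarrow> 0 + 0" by (intro tendsto_add l)
  then have s: "(\<lambda>n. ?X1 n + ?X2 n) \<longlonglongrightarrow> 0" by simp
  show "(\<lambda>n. \<integral>\<^sup>+ t. ennreal ((cnorm (spint (En n) (\<lambda>l. comb \<gamma>1 \<gamma>2 l t) v - spint E (\<lambda>l. comb \<gamma>1 \<gamma>2 l t) v))\<^sup>2) \<partial>summ \<eta>1 \<eta>2) \<longlonglongrightarrow> 0"
  proof (rule tendsto_sandwich[OF _ _ tendsto_const s])
    show "\<forall>\<^sub>F n in sequentially. 0 \<le> (\<integral>\<^sup>+ t. ennreal ((cnorm (spint (En n) (\<lambda>l. comb \<gamma>1 \<gamma>2 l t) v - spint E (\<lambda>l. comb \<gamma>1 \<gamma>2 l t) v))\<^sup>2) \<partial>summ \<eta>1 \<eta>2)"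
      by simp
    show "\<forall>\<^sub>F n in sequentially. (\<integral>\<^sup>+ t. ennreal ((cnorm (spint (En n) (\<lambda>l. comb \<gamma>1 \<gamma>2 l t) v - spint E (\<lambda>l. comb \<gamma>1 \<gamma>2 l t) v))\<^sup>2) \<partial>summ \<eta>1 \<eta>2) \<le> ?X1 n + ?X2 n"
    proof (intro always_eventually allI)
      fix n
      show "(\<integral>\<^sup>+ t. ennreal ((cnorm (spint (En n) (\<lambda>l. comb \<gamma>1 \<gamma>2 l t) v - spint E (\<lambda>l. comb \<gamma>1 \<gamma>2 l t) v))\<^sup>2) \<partial>summ \<eta>1 \<eta>2) \<le> ?X1 n + ?X2 n"
        using nn_split_le[where g="\<lambda>t. ennreal ((cnorm (spint (En n) (\<lambda>l. comb \<gamma>1 \<gamma>2 l t) v - spint E (\<lambda>l. comb \<gamma>1 \<gamma>2 l t) v))\<^sup>2)" and M=\<eta>1 and N=\<eta>2]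
        by simp
    qed
  qed
qed

theorem proposition3p1:
  fixes A B :: "'h::chs_chilbert op"
    and An Bn :: "nat \<Rightarrow> 'h op"
    and \<phi> \<psi> :: "real \<Rightarrow> real \<Rightarrow> complex"
  assumes "separable_ch (UNIV :: 'h set)"
    and "self_adjoint A" and "self_adjoint B"
    and "\<forall>n. self_adjoint (An n)" and "\<forall>n. self_adjoint (Bn n)"
  shows "(in_Ars TYPE('a) (spectral_measure A) (\<lambda>n. spectral_measure (An n)) \<phi> \<and>
          in_Ars TYPE('b) (spectral_measure A) (\<lambda>n. spectral_measure (An n)) \<psi> \<longrightarrow>
          in_Ars TYPE('a + 'b) (spectral_measure A) (\<lambda>n. spectral_measure (An n)) (\<lambda>l m. \<phi> l m + \<psi> l m))
       \<and> (in_Als TYPE('c) (spectral_measure B) (\<lambda>n. spectral_measure (Bn n)) \<phi> \<and>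
          in_Als TYPE('d) (spectral_measure B) (\<lambda>n. spectral_measure (Bn n)) \<psi> \<longrightarrow>
          in_Als TYPE('c + 'd) (spectral_measure B) (\<lambda>n. spectral_measure (Bn n)) (\<lambda>l m. \<phi> l m + \<psi> l m))"
proof (intro conjI impI)
  assume "in_Ars TYPE('a) (spectral_measure A) (\<lambda>n. spectral_measure (An n)) \<phi> \<and>
          in_Ars TYPE('b) (spectral_measure A) (\<lambda>n. spectral_measure (An n)) \<psi>"
  then obtain \<eta>1 :: "'a measure" and \<alpha>1 \<beta>1 and \<eta>2 :: "'b measure" and \<alpha>2 \<beta>2 where
    h: "admissible_rep \<eta>1 \<alpha>1 \<beta>1 \<phi>" "strong_approx \<eta>1 \<alpha>1 (spectral_measure A) (\<lambda>n. spectral_measure (An n))"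
       "admissible_rep \<eta>2 \<alpha>2 \<beta>2 \<psi>" "strong_approx \<eta>2 \<alpha>2 (spectral_measure A) (\<lambda>n. spectral_measure (An n))"
    unfolding in_Ars_def by blast
  show "in_Ars TYPE('a + 'b) (spectral_measure A) (\<lambda>n. spectral_measure (An n)) (\<lambda>l m. \<phi> l m + \<psi> l m)"
    unfolding in_Ars_def using adm_sum[OF h(1) h(3)] sa_sum[OF h(2) h(4)] by blast
next
  assume "in_Als TYPE('c) (spectral_measure B) (\<lambda>n. spectral_measure (Bn n)) \<phi> \<and>
          in_Als TYPE('d) (spectral_measure B) (\<lambda>n. spectral_measure (Bn n)) \<psi>"
  then obtain \<eta>1 :: "'c measure" and \<alpha>1 \<beta>1 and \<eta>2 :: "'d measure" and \<alpha>2 \<beta>2 where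
    h: "admissible_rep \<eta>1 \<alpha>1 \<beta>1 \<phi>" "strong_approx \<eta>1 \<beta>1 (spectral_measure B) (\<lambda>n. spectral_measure (Bn n))"
       "admissible_rep \<eta>2 \<alpha>2 \<beta>2 \<psi>" "strong_approx \<eta>2 \<beta>2 (spectral_measure B) (\<lambda>n. spectral_measure (Bn n))"
    unfolding in_Als_def by blast
  show "in_Als TYPE('c + 'd) (spectral_measure B) (\<lambda>n. spectral_measure (Bn n)) (\<lambda>l m. \<phi> l m + \<psi> l m)"
    unfolding in_Als_def using adm_sum[OF h(1) h(3)] sa_sum[OF h(2) h(4)] by blast
qed

end
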